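(* Let $a\in\mathbb{F}_q$ be nonzero, $n\geqslant 2$, and let $\mathcal{I}_n$ be the ideal of $\mathbb{F}_q[x_1,\dots,x_n]$ generated by $\mathcal{B}_n$. Then the set of common zeros of $\mathcal{I}_n$ in $\mathbb{F}_q^n$ is exactly $\mathcal{V}_n=\{v_0,v_1,\dots,v_n\}$, where $v_0=(0,\dots,0)$ and $v_k=\left(\binom{k}{1}a,\binom{k}{2}a^2,\dots,\binom{k}{k}a^k,0,\dots,0\right)\in\mathbb{F}_q^n$ for $1\leqslant k\leqslant n$. (These are precisely the values $(\xi_1(X),\dots,\xi_n(X))$ for $X$ ranging over $\{X\in\mathrm{M}(n,q):X^2=aX\}$, where $\det(\lambda I_n-X)=\lambda^n+\sum_{i=1}^n(-1)^i\xi_i(X)\lambda^{n-i}$.)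
   Context: $\mathbb{F}_q$ is the finite field with $q$ elements, and $\mathbb{F}_q[x_1,\dots,x_{n-1}]\subseteq\mathbb{F}_q[x_1,\dots,x_n]$. Define $\mathcal{B}_2=\{x_2^2-a^2x_2,\ x_2x_1-2ax_2,\ x_1^2-ax_1-2x_2\}\subseteq\mathbb{F}_q[x_1,x_2]$, and recursively for $n\geqslant 3$ $$\mathcal{B}_n=\left\{f-\frac{f(w_n)}{a^n}x_n : f\in\mathcal{B}_{n-1}\right\}\cup\left\{x_nx_i-\binom{n}{i}a^ix_n : i=1,\dots,n\right\},$$ where $w_n=\left(\binom{n}{1}a,\binom{n}{2}a^2,\dots,\binom{n}{n-1}a^{n-1}\right)\in\mathbb{F}_q^{n-1}$ and $f(w_n)$ denotes evaluation of $f\in\mathbb{F}_q[x_1,\dots,x_{n-1}]$ at $w_n$. *)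

theory Defs
  imports Main
begin

text \<open>Points of F^n are functions nat => 'a, coordinates 1..n, all other coordinates 0.
  Polynomials in x_1..x_n are represented by their polynomial functions on such points.\<close>

type_synonym 'a pt = "nat \<Rightarrow> 'a"
type_synonym 'a pfun = "'a pt \<Rightarrow> 'a"

definition in_space :: "nat \<Rightarrow> 'a::zero pt \<Rightarrow> bool" where
  "in_space n x \<longleftrightarrow> (\<forall>i. (i = 0 \<or> n < i) \<longrightarrow> x i = 0)"

inductive_set polyfun :: "nat \<Rightarrow> ('a::comm_ring_1) pfun set" for n where
  const: "(\<lambda>x. c) \<in> polyfun n"
| var: "1 \<le> i \<Longrightarrow> i \<le> n \<Longrightarrow> (\<lambda>x. x i) \<in> polyfun n"
| add: "f \<in> polyfun n \<Longrightarrow> g \<in> polyfun n \<Longrightarrow> (\<lambda>x. f x + g x) \<in> polyfun n"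
| mult: "f \<in> polyfun n \<Longrightarrow> g \<in> polyfun n \<Longrightarrow> (\<lambda>x. f x * g x) \<in> polyfun n"

definition ideal_gen :: "nat \<Rightarrow> ('a::comm_ring_1) pfun list \<Rightarrow> 'a pfun set" where
  "ideal_gen n B = {f. \<exists>gs. length gs = length B \<and> set gs \<subseteq> polyfun n \<and>
       f = (\<lambda>x. \<Sum>i<length B. (gs ! i) x * (B ! i) x)}"

definition zero_set :: "nat \<Rightarrow> ('a::comm_ring_1) pfun set \<Rightarrow> 'a pt set" where
  "zero_set n I = {x. in_space n x \<and> (\<forall>f\<in>I. f x = 0)}"

definition wpt :: "'a::comm_ring_1 \<Rightarrow> nat \<Rightarrow> 'a pt" where
  "wpt a n = (\<lambda>i. if 1 \<le> i \<and> i \<le> n - 1 then of_nat (n choose i) * a ^ i else 0)"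

definition vpt :: "'a::comm_ring_1 \<Rightarrow> nat \<Rightarrow> 'a pt" where
  "vpt a k = (\<lambda>i. if 1 \<le> i \<and> i \<le> k then of_nat (k choose i) * a ^ i else 0)"

fun Bgen :: "'a::field \<Rightarrow> nat \<Rightarrow> 'a pfun list" where
  "Bgen a 0 = []"
| "Bgen a (Suc 0) = []"
| "Bgen a (Suc (Suc 0)) =
     [(\<lambda>x. x 2 ^ 2 - a ^ 2 * x 2),
      (\<lambda>x. x 2 * x 1 - 2 * a * x 2),
      (\<lambda>x. x 1 ^ 2 - a * x 1 - 2 * x 2)]"
| "Bgen a (Suc (Suc (Suc m))) =
     (let n = m + 3 in
       map (\<lambda>f. (\<lambda>x. f x - f (wpt a n) / a ^ n * x n)) (Bgen a (n - 1))
       @ map (\<lambda>i. (\<lambda>x. x n * x i - of_nat (n choose i) * a ^ i * x n)) [1..<n+1])"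

end

theory Submission
  imports Defs
begin

lemma zs_eq:
  fixes B :: "('a::comm_ring_1) pfun list"
  shows "zero_set n (ideal_gen n B) = {x. in_space n x \<and> (\<forall>f\<in>set B. f x = 0)}"
proof (intro set_eqI iffI)
  fix x assume x: "x \<in> zero_set n (ideal_gen n B)"
  have "\<forall>f\<in>set B. f x = 0"
  proof
    fix f assume "f \<in> set B"
    then obtain j where j: "j < length B" "f = B ! j" by (auto simp: in_set_conv_nth)
    define gs where "gs = map (\<lambda>i. if i = j then (\<lambda>x::'a pt. 1::'a) else (\<lambda>x::'a pt. 0)) [0..<length B]"
    have "set gs \<subseteq> polyfun n" unfolding gs_def by (auto intro: polyfun.const)
    moreover have "length gs = length B" by (simp add: gs_def)
    ultimately have "(\<lambda>x. \<Sum>i<length B. (gs ! i) x * (B ! i) x) \<in> ideal_gen n B"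
      unfolding ideal_gen_def by blast
    with x have "(\<Sum>i<length B. (gs ! i) x * (B ! i) x) = 0" unfolding zero_set_def by auto
    moreover have "(\<Sum>i<length B. (gs ! i) x * (B ! i) x) = (\<Sum>i<length B. if i = j then (B ! i) x else 0)"
      by (rule sum.cong) (auto simp: gs_def)
    ultimately show "f x = 0" using j by simp
  qed
  with x show "x \<in> {x. in_space n x \<and> (\<forall>f\<in>set B. f x = 0)}" unfolding zero_set_def by auto
next
  fix x assume x: "x \<in> {x. in_space n x \<and> (\<forall>f\<in>set B. f x = 0)}"
  show "x \<in> zero_set n (ideal_gen n B)" unfolding zero_set_def ideal_gen_def
    using x by (auto intro!: sum.neutral dest!: bspec[OF _ nth_mem])
qed

lemma local_B:
  "f \<in> set (Bgen a n) \<Longrightarrow> (\<forall>i. 1 \<le> i \<and> i \<le> n \<longrightarrow> x i = y i) \<Longrightarrow> f x = f y"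
proof (induction a n arbitrary: f rule: Bgen.induct)
  case (1 a)
  then show ?case by simp
next
  case (2 a)
  then show ?case by simp
next
  case (3 a)
  have "x 1 = y 1" "x 2 = y 2" using 3(2) by auto
  then show ?case using 3(1) by auto
next
  case (4 a m)
  have agree: "\<forall>i. 1 \<le> i \<and> i \<le> Suc (Suc m) \<longrightarrow> x i = y i" using 4(3) by auto
  have IH: "\<And>g. g \<in> set (Bgen a (Suc (Suc m))) \<Longrightarrow> g x = g y"
  proof -
    fix g assume g: "g \<in> set (Bgen a (Suc (Suc m)))"
    have "Suc (Suc m) = m + 3 - 1" by simp
    then have g': "g \<in> set (Bgen a (m + 3 - 1))" using g by simp
    show "g x = g y" using 4(1)[OF refl g'] agree by simp
  qed
  have xn: "x (Suc (Suc (Suc m))) = y (Suc (Suc (Suc m)))" using 4(3) by simp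
  have "f \<in> (\<lambda>f. (\<lambda>x. f x - f (wpt a (Suc (Suc (Suc m)))) / a ^ (Suc (Suc (Suc m))) * x (Suc (Suc (Suc m))))) ` set (Bgen a (Suc (Suc m)))
      \<or> f \<in> (\<lambda>i. (\<lambda>x. x (Suc (Suc (Suc m))) * x i - of_nat (Suc (Suc (Suc m)) choose i) * a ^ i * x (Suc (Suc (Suc m))))) ` {1..<Suc (Suc (Suc (Suc m)))}"
    using 4(2) by (simp add: Let_def numeral_3_eq_3 del: upt_Suc)
  then show ?case
  proof
    assume "f \<in> (\<lambda>f. (\<lambda>x. f x - f (wpt a (Suc (Suc (Suc m)))) / a ^ (Suc (Suc (Suc m))) * x (Suc (Suc (Suc m))))) ` set (Bgen a (Suc (Suc m)))"
    then obtain g where "g \<in> set (Bgen a (Suc (Suc m)))" "f = (\<lambda>x. g x - g (wpt a (Suc (Suc (Suc m)))) / a ^ (Suc (Suc (Suc m))) * x (Suc (Suc (Suc m))))"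
      by blast
    then show ?thesis using IH xn by simp
  next
    assume "f \<in> (\<lambda>i. (\<lambda>x. x (Suc (Suc (Suc m))) * x i - of_nat (Suc (Suc (Suc m)) choose i) * a ^ i * x (Suc (Suc (Suc m))))) ` {1..<Suc (Suc (Suc (Suc m)))}"
    then obtain i where "i \<in> {1..<Suc (Suc (Suc (Suc m)))}" "f = (\<lambda>x. x (Suc (Suc (Suc m))) * x i - of_nat (Suc (Suc (Suc m)) choose i) * a ^ i * x (Suc (Suc (Suc m))))"
      by blast
    moreover then have "x i = y i" using 4(3) by auto
    ultimately show ?thesis using xn by simp
  qed
qed

lemma vpt_in: "k \<le> n \<Longrightarrow> in_space n (vpt a k)"
  by (auto simp: in_space_def vpt_def)

lemma main:
  fixes a :: "'a::field"
  assumes a: "a \<noteq> 0"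
  shows "in_space (m+2) x \<Longrightarrow> ((\<forall>f\<in>set (Bgen a (m+2)). f x = 0) \<longleftrightarrow> (\<exists>k\<le>m+2. x = vpt a k))"
proof (induction m arbitrary: x)
  case 0
  have x: "x = (\<lambda>i. if i = 1 then x 1 else if i = 2 then x 2 else 0)"
  proof
    fix i show "x i = (if i = 1 then x 1 else if i = 2 then x 2 else 0)"
      using 0 unfolding in_space_def by (cases "i = 0 \<or> 2 < i") (auto simp: numeral_2_eq_2, metis One_nat_def Suc_lessI le_less_Suc_eq not_le)
  qed
  have v0: "vpt a 0 = (\<lambda>i. 0)" by (auto simp: vpt_def fun_eq_iff)
  have v1: "vpt a 1 = (\<lambda>i. if i = 1 then a else 0)" by (auto simp: vpt_def fun_eq_iff)
  have v2: "vpt a 2 = (\<lambda>i. if i = 1 then 2*a else if i = 2 then a^2 else 0)"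
    by (auto simp: vpt_def fun_eq_iff numeral_2_eq_2)
  have ex: "(\<exists>k\<le>2. x = vpt a k) \<longleftrightarrow> x = vpt a 0 \<or> x = vpt a 1 \<or> x = vpt a 2"
    by (auto simp: le_Suc_eq numeral_2_eq_2)
  have B2: "Bgen a 2 = [(\<lambda>x. x 2 ^ 2 - a ^ 2 * x 2),
      (\<lambda>x. x 2 * x 1 - 2 * a * x 2),
      (\<lambda>x. x 1 ^ 2 - a * x 1 - 2 * x 2)]" by (simp add: numeral_2_eq_2)
  show ?case
  proof
    assume "\<forall>f\<in>set (Bgen a (0+2)). f x = 0"
    then have e1: "x 2 ^ 2 - a ^ 2 * x 2 = 0" and e2: "x 2 * x 1 - 2 * a * x 2 = 0"
      and e3: "x 1 ^ 2 - a * x 1 - 2 * x 2 = 0" by (auto simp: B2)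
    from e1 have "x 2 * (x 2 - a^2) = 0" by (simp add: algebra_simps power2_eq_square)
    then have "x 2 = 0 \<or> x 2 = a^2" by auto
    then show "\<exists>k\<le>0+2. x = vpt a k"
    proof
      assume h: "x 2 = 0"
      with e3 have "x 1 * (x 1 - a) = 0" by (simp add: algebra_simps power2_eq_square)
      then have "x 1 = 0 \<or> x 1 = a" by auto
      then show ?thesis
      proof
        assume c: "x 1 = 0"
        have "x = vpt a 0" apply (rule ext) apply (subst x) apply (simp add: c h v0 c[unfolded One_nat_def] v1[unfolded One_nat_def]) done
        then show ?thesis by (intro exI[of _ 0]) simp
      next
        assume c: "x 1 = a"
        have "x = vpt a 1" apply (rule ext) apply (subst x) apply (simp add: c h v1 c[unfolded One_nat_def] v1[unfolded One_nat_def]) done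
        then show ?thesis by (intro exI[of _ 1]) simp
      qed
    next
      assume h: "x 2 = a^2"
      with e2 have "a^2 * (x 1 - 2 * a) = 0" by (simp add: algebra_simps power2_eq_square)
      with a have c: "x 1 = 2 * a" by simp
      have "x = vpt a 2" apply (rule ext) apply (subst x) apply (simp add: c h v2 c[unfolded One_nat_def] v1[unfolded One_nat_def]) done
      then show ?thesis by (intro exI[of _ 2]) simp
    qed
  next
    assume "\<exists>k\<le>0+2. x = vpt a k"
    then have "\<exists>k\<le>2. x = vpt a k" by (simp only: add_0)
    then have "x = vpt a 0 \<or> x = vpt a 1 \<or> x = vpt a 2" using ex by blast
    then show "\<forall>f\<in>set (Bgen a (0+2)). f x = 0"
    proof (elim disjE)
      assume "x = vpt a 0" note xe = this[unfolded v0] then show ?thesis by (simp add: B2)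
    next
      assume "x = vpt a 1" note xe = this[unfolded v1] then show ?thesis by (simp add: B2 power2_eq_square)
    next
      assume "x = vpt a 2" note xe = this[unfolded v2] then show ?thesis by (simp add: B2 power2_eq_square algebra_simps)
    qed
  qed
next
  case (Suc m)
  define n where "n = m + 3"
  have Bn: "set (Bgen a (Suc m + 2)) = (\<lambda>f. (\<lambda>x. f x - f (wpt a n) / a ^ n * x n)) ` set (Bgen a (m+2))
      \<union> (\<lambda>i. (\<lambda>x. x n * x i - of_nat (n choose i) * a ^ i * x n)) ` {1..n}"
  proof -
    have s3: "Suc m + 2 = Suc (Suc (Suc m))" by simp
    have e: "Bgen a (Suc m + 2) = map (\<lambda>f. (\<lambda>x. f x - f (wpt a (m+3)) / a ^ (m+3) * x (m+3))) (Bgen a (m + 3 - 1))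
       @ map (\<lambda>i. (\<lambda>x. x (m+3) * x i - of_nat ((m+3) choose i) * a ^ i * x (m+3))) [1..<m+3+1]"
      by (simp only: s3 Bgen.simps(4) Let_def)
    have e2: "m + 3 - 1 = m + 2" by simp
    have e3: "set [1..<m+3+1] = {1..m+3}" by auto
    show ?thesis unfolding e e2 set_append set_map e3 n_def ..
  qed
  have G: "(\<forall>f\<in>set (Bgen a (Suc m + 2)). f x = 0) \<longleftrightarrow>
     (\<forall>f\<in>set (Bgen a (m+2)). f x - f (wpt a n) / a ^ n * x n = 0) \<and>
     (\<forall>i\<in>{1..n}. x n * x i - of_nat (n choose i) * a ^ i * x n = 0)"
    unfolding Bn ball_Un by (simp only: ball_simps(9))
  have vn_n: "vpt a k n = 0" if "k < n" for k using that by (simp add: vpt_def)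
  have vnn: "vpt a n n = a ^ n" by (simp add: vpt_def n_def)
  have an: "a ^ n \<noteq> 0" using a by simp
  have sm: "Suc m + 2 = n" by (simp add: n_def)
  show ?case
  proof (cases "x n = 0")
    case True
    have ins: "in_space (m+2) x" using Suc.prems True unfolding in_space_def n_def
      by (metis Suc_lessI add_Suc_right add_Suc_shift numeral_2_eq_2 numeral_3_eq_3 sm n_def)
    have "(\<forall>f\<in>set (Bgen a (Suc m + 2)). f x = 0) \<longleftrightarrow> (\<forall>f\<in>set (Bgen a (m+2)). f x = 0)"
      unfolding G using True by simp
    also have "\<dots> \<longleftrightarrow> (\<exists>k\<le>m+2. x = vpt a k)" using Suc.IH[OF ins] .
    also have "\<dots> \<longleftrightarrow> (\<exists>k\<le>Suc m+2. x = vpt a k)"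
    proof
      assume "\<exists>k\<le>Suc m+2. x = vpt a k"
      then obtain k where k: "k \<le> n" "x = vpt a k" using sm by auto
      have "k \<noteq> n" using k True vnn an by auto
      with k have "k \<le> m+2" by (simp add: n_def)
      with k show "\<exists>k\<le>m+2. x = vpt a k" by blast
    next
      assume "\<exists>k\<le>m+2. x = vpt a k"
      then obtain k where "k \<le> m+2" "x = vpt a k" by blast
      moreover then have "k \<le> Suc m + 2" by simp
      ultimately show "\<exists>k\<le>Suc m+2. x = vpt a k" by blast
    qed
    finally show ?thesis .
  next
    case False
    show ?thesis
    proof
      assume "\<forall>f\<in>set (Bgen a (Suc m + 2)). f x = 0"
      then have E1: "\<forall>i\<in>{1..n}. x n * x i - of_nat (n choose i) * a ^ i * x n = 0" using G by blast
      from E1 have "x n * x n - a ^ n * x n = 0" by (auto simp: n_def)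
      then have "x n * (x n - a^n) = 0" by (simp add: algebra_simps)
      with False have xn: "x n = a ^ n" by simp
      have "x = vpt a n"
      proof
        fix i
        show "x i = vpt a n i"
        proof (cases "1 \<le> i \<and> i \<le> n")
          case True
          with E1 have "x n * x i - of_nat (n choose i) * a ^ i * x n = 0" by auto
          then have "x n * (x i - of_nat (n choose i) * a ^ i) = 0" by (simp add: algebra_simps)
          with False have "x i = of_nat (n choose i) * a ^ i" by simp
          then show ?thesis using True by (simp add: vpt_def)
        next
          case F: False
          then have "i = 0 \<or> Suc m + 2 < i" using sm by auto
          then show ?thesis using Suc.prems F unfolding in_space_def vpt_def by auto
        qed
      qed
      then show "\<exists>k\<le>Suc m+2. x = vpt a k" using sm by auto
    next
      assume "\<exists>k\<le>Suc m+2. x = vpt a k"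
      then obtain k where k: "k \<le> n" "x = vpt a k" using sm by auto
      have "k = n" using k False vn_n by (cases "k < n") auto
      then have xv: "x = vpt a n" using k by simp
      have "\<forall>f\<in>set (Bgen a (m+2)). f x - f (wpt a n) / a ^ n * x n = 0"
      proof
        fix f assume f: "f \<in> set (Bgen a (m+2))"
        have "f (vpt a n) = f (wpt a n)"
          by (rule local_B[OF f]) (auto simp: vpt_def wpt_def n_def)
        then show "f x - f (wpt a n) / a ^ n * x n = 0" using xv vnn an by simp
      qed
      moreover have "\<forall>i\<in>{1..n}. x n * x i - of_nat (n choose i) * a ^ i * x n = 0"
        using xv vnn by (auto simp: vpt_def)
      ultimately show "\<forall>f\<in>set (Bgen a (Suc m + 2)). f x = 0" using G by blast
    qed
  qed
qed

theorem theorem4p7: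
  fixes a :: "'a::{finite,field}" and n :: nat
  assumes "a \<noteq> 0" and "2 \<le> n"
  shows "zero_set n (ideal_gen n (Bgen a n)) = {vpt a k | k. k \<le> n}"
proof -
  obtain m where m: "n = m + 2" using assms(2) by (metis add.commute le_Suc_ex)
  show ?thesis
  proof (intro set_eqI iffI)
    fix x assume "x \<in> zero_set n (ideal_gen n (Bgen a n))"
    then have "in_space (m+2) x" "\<forall>f\<in>set (Bgen a (m+2)). f x = 0" unfolding zs_eq m by auto
    then have "\<exists>k\<le>m+2. x = vpt a k" using main[OF assms(1)] by blast
    then show "x \<in> {vpt a k | k. k \<le> n}" unfolding m by blast
  next
    fix x assume "x \<in> {vpt a k | k. k \<le> n}"
    then obtain k where k: "k \<le> m+2" "x = vpt a k" unfolding m by blast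
    then have i: "in_space (m+2) x" using vpt_in by blast
    then have "\<forall>f\<in>set (Bgen a (m+2)). f x = 0" using main[OF assms(1) i] k by blast
    then show "x \<in> zero_set n (ideal_gen n (Bgen a n))" unfolding zs_eq m using i by blast
  qed
qed

end
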